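(* Let $r\geqslant2$ and let $\alpha:\mathrm{GL}_r(k_\mathrm{F})\to\mathrm{R}$ be a function such that $\alpha(ug)=\overline\psi(u)\alpha(g)$ for all $u\in\mathrm{U}_r(k_\mathrm{F})$, $g\in\mathrm{GL}_r(k_\mathrm{F})$. Then for all $g\in\mathrm{GL}_r(k_\mathrm{F})$, $$\frac{1}{|\mathrm{U}_r(k_\mathrm{F})|}\sum_{u\in\mathrm{U}_r(k_\mathrm{F})}\ \sum_{b\in\mathrm{B}^{\mathrm{op}}_{r-1}(k_\mathrm{F})}\overline\psi^{-1}(u)\,\alpha(bug)=\alpha(g).$$
   Context: $k_\mathrm{F}$ is a finite field of characteristic $p$ and $\mathrm{R}$ an algebraically closed field of characteristic $\ell\neq p$. $\mathrm{U}_r(k_\mathrm{F})$ is the group of upper unitriangular $r\times r$ matrices; $\overline\psi:k_\mathrm{F}\to\mathrm{R}^\times$ is a non-trivial character, and $\overline\psi(u):=\overline\psi(u_{1,2}+\dots+u_{r-1,r})$ for $u\in\mathrm{U}_r(k_\mathrm{F})$. $\mathrm{B}^{\mathrm{op}}_{r-1}(k_\mathrm{F})$ is the group of invertible lower triangular $(r-1)\times(r-1)$ matrices, viewed in $\mathrm{GL}_r(k_\mathrm{F})$ via $g\mapsto\mathrm{diag}(g,1)$ (for $r=2$, this is $\{\mathrm{diag}(a,1):a\in k_\mathrm{F}^\times\}$). *)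

theory Defs
  imports "Jordan_Normal_Form.Matrix" "HOL-Computational_Algebra.Polynomial"
begin

text \<open>Matrices are Jordan_Normal_Form matrices; indices run over 0..r-1.\<close>

definition GL :: "nat \<Rightarrow> ('k::field) mat set" where
  "GL r = {g \<in> carrier_mat r r. invertible_mat g}"

definition UT :: "nat \<Rightarrow> ('k::field) mat set" where
  "UT r = {u \<in> carrier_mat r r. (\<forall>i<r. u $$ (i,i) = 1) \<and> (\<forall>i<r. \<forall>j<i. u $$ (i,j) = 0)}"

definition lower_tri :: "nat \<Rightarrow> ('k::field) mat \<Rightarrow> bool" where
  "lower_tri n g \<longleftrightarrow> (\<forall>i<n. \<forall>j<n. i < j \<longrightarrow> g $$ (i,j) = 0)"

text \<open>B^op_{r-1} embedded in GL_r via g |-> diag(g,1).\<close>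
definition Bop :: "nat \<Rightarrow> ('k::field) mat set" where
  "Bop r = (\<lambda>g. four_block_mat g (0\<^sub>m (r-1) 1) (0\<^sub>m 1 (r-1)) (1\<^sub>m 1)) `
     {g \<in> carrier_mat (r-1) (r-1). lower_tri (r-1) g \<and> invertible_mat g}"

text \<open>psi-bar(u) = psi(u_{1,2} + ... + u_{r-1,r}) (0-based indices).\<close>
definition psibar :: "('k \<Rightarrow> 'r) \<Rightarrow> nat \<Rightarrow> ('k::field) mat \<Rightarrow> 'r" where
  "psibar \<psi> r u = \<psi> (\<Sum>i<r-1. u $$ (i, i+1))"

definition alg_closed :: "'r::field itself \<Rightarrow> bool" where
  "alg_closed _ \<longleftrightarrow> (\<forall>p::'r poly. degree p > 0 \<longrightarrow> (\<exists>x. poly p x = 0))"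

end

theory Submission imports Defs "Jordan_Normal_Form.Determinant" "HOL-Algebra.Sylow" "HOL-Algebra.Multiplicative_Group" "HOL-Computational_Algebra.Primes" begin


definition UTmap :: "nat \<Rightarrow> (nat \<times> nat \<Rightarrow> 'k::field) \<Rightarrow> 'k mat" where
  "UTmap r h = mat r r (\<lambda>(i,j). if i = j then 1 else if i < j then h (i,j) else 0)"

lemma UT_image: "UT r = UTmap r ` (PiE {(i,j). i < j \<and> j < r} (\<lambda>_. UNIV))"
proof
  show "UT r \<subseteq> UTmap r ` (PiE {(i,j). i < j \<and> j < r} (\<lambda>_. UNIV))"
  proof
    fix u assume u: "u \<in> UT r"
    let ?h = "restrict (\<lambda>ij. u $$ ij) {(i,j). i < j \<and> j < r}"
    have "u = UTmap r ?h"
    proof (rule eq_matI)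
      fix i j assume ij: "i < dim_row (UTmap r ?h)" "j < dim_col (UTmap r ?h)"
      hence ij': "i < r" "j < r" by (auto simp: UTmap_def)
      show "u $$ (i, j) = UTmap r ?h $$ (i, j)"
        using u ij' unfolding UT_def UTmap_def
        by (cases i j rule: linorder_cases) auto
    qed (use u in \<open>auto simp: UT_def UTmap_def\<close>)
    thus "u \<in> UTmap r ` (PiE {(i,j). i < j \<and> j < r} (\<lambda>_. UNIV))" by auto
  qed
  show "UTmap r ` (PiE {(i,j). i < j \<and> j < r} (\<lambda>_. UNIV)) \<subseteq> UT r"
    by (auto simp: UT_def UTmap_def)
qed

lemma UTmap_inj: "inj_on (UTmap r) (PiE {(i,j). i < j \<and> j < r} (\<lambda>_. UNIV))"
proof (rule inj_onI)
  fix h1 h2 assume h: "h1 \<in> PiE {(i,j). i < j \<and> j < r} (\<lambda>_. UNIV)" "h2 \<in> PiE {(i,j). i < j \<and> j < r} (\<lambda>_. UNIV)"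
    and e: "UTmap r h1 = UTmap r h2"
  show "h1 = h2"
  proof (rule PiE_ext[OF h])
    fix x assume "x \<in> {(i,j). i < j \<and> j < r}"
    then obtain i j where x: "x = (i,j)" "i < j" "j < r" by auto
    have "UTmap r h1 $$ (i,j) = UTmap r h2 $$ (i,j)" using e by simp
    thus "h1 x = h2 x" using x by (simp add: UTmap_def)
  qed
qed

lemma card_UT: "card (UT r :: 'k::{finite,field} mat set) = card (UNIV :: 'k set) ^ card {(i,j). i < j \<and> j < r}"
proof -
  have fin: "finite {(i::nat,j). i < j \<and> j < r}"
    by (rule finite_subset[of _ "{..<r} \<times> {..<r}"]) auto
  show ?thesis unfolding UT_image card_image[OF UTmap_inj]
    by (simp add: card_PiE[OF fin])
qed

lemma finite_UT: "finite (UT r :: 'k::{finite,field} mat set)"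
  unfolding UT_image by (rule finite_imageI, rule finite_PiE) (auto intro: finite_subset[of _ "{..<r} \<times> {..<r}"])

definition addG :: "'k::field monoid" where "addG = \<lparr>carrier = UNIV, monoid.mult = (+), one = 0\<rparr>"

lemma addG_group: "group (addG :: 'k::field monoid)"
  apply (rule groupI) apply (auto simp: addG_def)
  by (metis add.commute add.right_inverse)

lemma addG_pow: "x [^]\<^bsub>(addG :: 'k::field monoid)\<^esub> (n::nat) = of_nat n * x"
  by (induction n) (auto simp: addG_def algebra_simps)

lemma prime_dvd_card_field:
  fixes l :: nat
  assumes "prime l" "l dvd card (UNIV :: 'k::{finite,field} set)"
  shows "l = CHAR('k)"
proof -
  interpret G: group "addG :: 'k monoid" by (rule addG_group)
  have "sylow (addG :: 'k monoid) l 1 (card (UNIV :: 'k set) div l)"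
    unfolding sylow_eq sylow_axioms_def using assms addG_group
    by (auto simp: order_def addG_def)
  then obtain H where H: "subgroup H (addG :: 'k monoid)" "card H = l"
    using sylow.sylow_thm by fastforce
  have fH: "finite H" by simp
  have "card H \<ge> 2" using H assms prime_ge_2_nat by auto
  then obtain x where x: "x \<in> H" "x \<noteq> 0"
  proof -
    have "\<not> H \<subseteq> {0}"
    proof
      assume "H \<subseteq> {0}" hence "card H \<le> card {0::'k}" by (intro card_mono) auto
      thus False using \<open>card H \<ge> 2\<close> by simp
    qed
    thus ?thesis using that by blast
  qed
  interpret Hg: group "(addG :: 'k monoid)\<lparr>carrier := H\<rparr>"
    using G.subgroup_imp_group H(1) by blast
  have "x [^]\<^bsub>(addG :: 'k monoid)\<lparr>carrier := H\<rparr>\<^esub> order ((addG :: 'k monoid)\<lparr>carrier := H\<rparr>) = \<one>\<^bsub>(addG :: 'k monoid)\<lparr>carrier := H\<rparr>\<^esub>"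
    using Hg.pow_order_eq_1 x by simp
  hence "x [^]\<^bsub>(addG :: 'k monoid)\<^esub> l = 0"
    using H by (simp add: order_def addG_def nat_pow_def)
  hence "of_nat l * x = 0" by (simp add: addG_pow)
  hence "of_nat l = (0::'k)" using x by simp
  hence "CHAR('k) dvd l" by (simp add: of_nat_eq_0_iff_char_dvd)
  moreover have "CHAR('k) \<noteq> 1" by simp
  ultimately show ?thesis using assms(1) by (metis prime_nat_iff)
qed

lemma card_UT_nonzero:
  assumes "CHAR('r::field) \<noteq> CHAR('k::{finite,field})"
  shows "(of_nat (card (UT n :: 'k mat set)) :: 'r) \<noteq> 0"
proof -
  have "(of_nat (card (UNIV :: 'k set)) :: 'r) \<noteq> 0"
  proof
    assume h: "(of_nat (card (UNIV :: 'k set)) :: 'r) = 0"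
    hence d: "CHAR('r) dvd card (UNIV :: 'k set)" by (simp add: of_nat_eq_0_iff_char_dvd)
    have "card (UNIV :: 'k set) > 0" by (simp add: card_gt_0_iff)
    hence "CHAR('r) > 0" using d by (metis dvd_0_left_iff gr0I less_not_refl)
    hence "prime CHAR('r)" by (rule prime_CHAR_semidom)
    hence "CHAR('r) = CHAR('k)" using d prime_dvd_card_field by blast
    thus False using assms by simp
  qed
  thus ?thesis unfolding card_UT by simp
qed


lemma det_ne0_invertible:
  fixes A :: "'a::field mat"
  assumes A: "A \<in> carrier_mat n n" and d: "det A \<noteq> 0"
  shows "invertible_mat A"
proof -
  have "A \<in> Units (ring_mat TYPE('a) n ())" by (rule det_non_zero_imp_unit[OF A d])
  then obtain B where B: "B \<in> carrier_mat n n" "B * A = 1\<^sub>m n" "A * B = 1\<^sub>m n"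
    by (auto simp: Units_def ring_mat_simps)
  thus ?thesis using A unfolding invertible_mat_def inverts_mat_def square_mat.simps
    by auto
qed

lemma invertible_det_ne0:
  assumes A: "A \<in> carrier_mat n n" and i: "invertible_mat (A::'a::field mat)"
  shows "det A \<noteq> 0"
proof -
  obtain B where B: "A * B = 1\<^sub>m (dim_row A)" "B * A = 1\<^sub>m (dim_row B)"
    using i unfolding invertible_mat_def inverts_mat_def by auto
  have "dim_col B = n" using B(1) A by (metis index_mult_mat(3) carrier_matD(1) index_one_mat(3))
  moreover have "dim_row B = n" using B(2) A by (metis index_mult_mat(3) carrier_matD(2) index_one_mat(3))
  ultimately have Bc: "B \<in> carrier_mat n n" by auto
  have "det A * det B = 1" using det_mult[OF A Bc] B(1) A by simp
  thus ?thesis by auto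
qed

lemma GL_iff: "A \<in> GL n \<longleftrightarrow> A \<in> carrier_mat n n \<and> det A \<noteq> (0::'a::field)"
  unfolding GL_def using det_ne0_invertible invertible_det_ne0 by blast

lemma GL_mult: "A \<in> GL n \<Longrightarrow> B \<in> GL n \<Longrightarrow> A * B \<in> GL n"
  unfolding GL_iff by (auto simp: det_mult)

lemma UT_D:
  assumes "u \<in> UT r"
  shows "u \<in> carrier_mat r r" "\<And>i. i < r \<Longrightarrow> u $$ (i,i) = 1" "\<And>i j. i < r \<Longrightarrow> j < i \<Longrightarrow> u $$ (i,j) = 0"
  using assms by (auto simp: UT_def)

lemma UT_GL: assumes "u \<in> UT r" shows "u \<in> GL r"
proof -
  have c: "u \<in> carrier_mat r r" using UT_D[OF assms] by auto
  have "upper_triangular u" using UT_D[OF assms] c unfolding upper_triangular_def by auto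
  moreover have "diag_mat u = replicate r 1"
    using UT_D[OF assms] c by (simp add: diag_mat_def list_eq_iff_nth_eq)
  ultimately have "det u = 1" using det_upper_triangular[OF _ c] by simp
  thus ?thesis using c GL_iff by force
qed

lemma one_UT: "1\<^sub>m r \<in> UT r" by (auto simp: UT_def)

lemma UT_mult_entry:
  assumes v: "v \<in> UT r" and u: "u \<in> UT r" and i: "i < r" and j: "j < r"
  shows "(v * u) $$ (i,j) = (\<Sum>s\<in>{i..j}. v $$ (i,s) * u $$ (s,j))"
proof -
  have vc: "v \<in> carrier_mat r r" and uc: "u \<in> carrier_mat r r" using UT_D v u by auto
  have "(v * u) $$ (i,j) = (\<Sum>s\<in>{0..<r}. v $$ (i,s) * u $$ (s,j))"
    using vc uc i j by (simp add: scalar_prod_def)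
  also have "\<dots> = (\<Sum>s\<in>{i..j}. v $$ (i,s) * u $$ (s,j))"
  proof (rule sum.mono_neutral_right)
    show "{i..j} \<subseteq> {0..<r}" using j by auto
    show "\<forall>s\<in>{0..<r} - {i..j}. v $$ (i,s) * u $$ (s,j) = 0"
      using UT_D(3)[OF v] UT_D(3)[OF u] i by auto
  qed auto
  finally show ?thesis .
qed

lemma UT_mult: assumes v: "v \<in> UT r" and u: "u \<in> UT r" shows "v * u \<in> UT r"
proof -
  have vc: "v \<in> carrier_mat r r" and uc: "u \<in> carrier_mat r r" using UT_D v u by auto
  show ?thesis unfolding UT_def
    using vc uc UT_mult_entry[OF v u] UT_D(2)[OF v] UT_D(2)[OF u] by auto
qed

lemma UT_mult_super:
  assumes v: "v \<in> UT r" and u: "u \<in> UT r" and i: "i + 1 < r"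
  shows "(v * u) $$ (i,i+1) = v $$ (i,i+1) + u $$ (i,i+1)"
proof -
  have "{i..i+1} = {i, i+1}" by auto
  thus ?thesis using UT_mult_entry[OF v u, of i "i+1"] i UT_D(2)[OF v] UT_D(2)[OF u] by simp
qed

lemma psibar_mult:
  assumes add: "\<And>a b. \<psi> (a + b) = \<psi> a * \<psi> b"
    and v: "v \<in> UT r" and u: "u \<in> UT r"
  shows "psibar \<psi> r (v * u) = psibar \<psi> r v * psibar \<psi> r u"
proof -
  have "(\<Sum>i<r-1. (v*u) $$ (i, i+1)) = (\<Sum>i<r-1. v $$ (i, i+1) + u $$ (i,i+1))"
    apply (rule sum.cong, simp) using UT_mult_super[OF v u] by auto
  thus ?thesis unfolding psibar_def by (simp add: sum.distrib add)
qed

lemma Bop_D: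
  assumes b: "b \<in> Bop r" and r: "r \<ge> 1"
  shows "b \<in> carrier_mat r r" "\<And>i j. i < j \<Longrightarrow> j < r \<Longrightarrow> b $$ (i,j) = 0"
    "\<And>j. j < r \<Longrightarrow> b $$ (r-1,j) = (if j = r-1 then 1 else 0)" "b \<in> GL r"
proof -
  obtain g where g: "g \<in> carrier_mat (r-1) (r-1)" "lower_tri (r-1) g" "invertible_mat g"
    and bg: "b = four_block_mat g (0\<^sub>m (r-1) 1) (0\<^sub>m 1 (r-1)) (1\<^sub>m 1)"
    using b unfolding Bop_def by auto
  have rr: "r - 1 + 1 = r" using r by simp
  show bc: "b \<in> carrier_mat r r" using g(1) bg four_block_carrier_mat[OF g(1), of "1\<^sub>m 1" 1 1] rr by simp
  show "\<And>i j. i < j \<Longrightarrow> j < r \<Longrightarrow> b $$ (i,j) = 0"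
    using g bg rr unfolding lower_tri_def by auto
  show "\<And>j. j < r \<Longrightarrow> b $$ (r-1,j) = (if j = r-1 then 1 else 0)"
    using g bg rr by auto
  have "det b = det g * det (1\<^sub>m 1 :: 'a mat)"
    unfolding bg by (rule det_four_block_mat_lower_left_zero[OF g(1)]) auto
  hence "det b \<noteq> 0" using invertible_det_ne0[OF g(1) g(3)] by simp
  thus "b \<in> GL r" using bc GL_iff by blast
qed

lemma one_Bop: assumes r: "r \<ge> 1" shows "1\<^sub>m r \<in> Bop r"
proof -
  have "1\<^sub>m r = four_block_mat (1\<^sub>m (r-1)) (0\<^sub>m (r-1) 1) (0\<^sub>m 1 (r-1)) (1\<^sub>m 1)"
    using r by simp
  moreover have "invertible_mat (1\<^sub>m (r-1) :: 'a mat)"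
    by (rule det_ne0_invertible[of _ "r-1"]) auto
  ultimately show ?thesis unfolding Bop_def lower_tri_def
    by (intro image_eqI[where x="1\<^sub>m (r-1)"]) auto
qed



lemma Bop_twist:
  fixes \<psi> :: "'k::field \<Rightarrow> 'r::field"
  assumes b: "b \<in> Bop r" and r: "r \<ge> 2" and nb: "b \<noteq> 1\<^sub>m r"
    and add: "\<And>a b. \<psi> (a + b) = \<psi> a * \<psi> b" and a: "\<psi> a \<noteq> 1"
    and nz: "\<And>x. \<psi> x \<noteq> 0"
  shows "\<exists>v w. v \<in> UT r \<and> w \<in> UT r \<and> b * v = w * b \<and> psibar \<psi> r w \<noteq> psibar \<psi> r v"
proof -
  have r1: "r \<ge> 1" using r by simp
  note bc = Bop_D(1)[OF b r1] and blow = Bop_D(2)[OF b r1] and blast = Bop_D(3)[OF b r1]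
  define K where "K = {i. i < r \<and> (\<exists>j<r. b $$ (i,j) \<noteq> (if i = j then 1 else 0))}"
  have "K \<noteq> {}"
  proof
    assume "K = {}"
    hence "b = 1\<^sub>m r" using bc by (intro eq_matI) (auto simp: K_def)
    thus False using nb by simp
  qed
  moreover have fK: "finite K" by (auto simp: K_def)
  ultimately have kK: "Max K \<in> K" by simp
  define k where "k = Max K"
  have kr: "k < r - 1"
  proof -
    have "k < r" using kK by (auto simp: K_def k_def)
    moreover have "k \<noteq> r - 1"
    proof
      assume e: "k = r - 1"
      obtain j where "j < r" "b $$ (k,j) \<noteq> (if k = j then 1 else 0)"
        using kK by (auto simp: K_def k_def)
      thus False using blast[of j] e by (auto split: if_splits)
    qed
    ultimately show ?thesis by simp
  qed
  have rowid: "b $$ (i,j) = (if i = j then 1 else 0)" if "k < i" "i < r" "j < r" for i j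
  proof (rule ccontr)
    assume "b $$ (i,j) \<noteq> (if i = j then 1 else 0)"
    hence "i \<in> K" using that unfolding K_def by blast
    hence "i \<le> k" using fK by (simp add: k_def)
    thus False using that by simp
  qed
  obtain j where j: "j < r" "b $$ (k,j) \<noteq> (if k = j then 1 else 0)"
    using kK by (auto simp: K_def k_def)
  have jk: "j \<le> k"
  proof (rule ccontr)
    assume "\<not> j \<le> k" hence "b $$ (k,j) = 0" using blow j by simp
    thus False using j \<open>\<not> j \<le> k\<close> by simp
  qed
  define c where "c = b $$ (k,j) - (if k = j then 1 else 0)"
  have c0: "c \<noteq> 0" using j by (simp add: c_def)
  define t where "t = a / c"
  define E :: "'k mat" where "E = mat r r (\<lambda>(p,q). if p = j then (if q = k+1 then t else 0) else 0)"
  define F :: "'k mat" where "F = mat r r (\<lambda>(p,q). if q = k+1 \<and> p \<le> k then t * b $$ (p,j) else 0)"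
  define v where "v = 1\<^sub>m r + E"
  define w where "w = 1\<^sub>m r + F"
  have Ec: "E \<in> carrier_mat r r" and Fc: "F \<in> carrier_mat r r" by (auto simp: E_def F_def)
  have vU: "v \<in> UT r" using jk unfolding UT_def v_def E_def by auto
  have wU: "w \<in> UT r" unfolding UT_def w_def F_def by auto
  have bE: "(b * E) $$ (p,q) = (if q = k+1 then b $$ (p,j) * t else 0)" if "p < r" "q < r" for p q
  proof -
    have "(b * E) $$ (p,q) = (\<Sum>s\<in>{0..<r}. b $$ (p,s) * E $$ (s,q))"
      using that bc Ec by (simp add: scalar_prod_def)
    also have "\<dots> = (\<Sum>s\<in>{0..<r}. if s = j then b $$ (p,j) * (if q = k+1 then t else 0) else 0)"
      by (rule sum.cong) (use that in \<open>auto simp: E_def\<close>)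
    also have "\<dots> = (if q = k+1 then b $$ (p,j) * t else 0)" using j by simp
    finally show ?thesis .
  qed
  have Fb: "(F * b) $$ (p,q) = (if p \<le> k then t * b $$ (p,j) else 0) * b $$ (k+1,q)" if "p < r" "q < r" for p q
  proof -
    have "(F * b) $$ (p,q) = (\<Sum>s\<in>{0..<r}. F $$ (p,s) * b $$ (s,q))"
      using that bc Fc by (simp add: scalar_prod_def)
    also have "\<dots> = (\<Sum>s\<in>{0..<r}. if s = k+1 then (if p \<le> k then t * b $$ (p,j) else 0) * b $$ (k+1,q) else 0)"
      by (rule sum.cong) (use that in \<open>auto simp: F_def\<close>)
    also have "\<dots> = (if p \<le> k then t * b $$ (p,j) else 0) * b $$ (k+1,q)" using kr by simp
    finally show ?thesis .
  qed
  have bEFb: "b * E = F * b"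
  proof (rule eq_matI)
    fix p q assume "p < dim_row (F * b)" "q < dim_col (F * b)"
    hence pq: "p < r" "q < r" using bc Fc by auto
    have rk: "b $$ (k+1,q) = (if q = k+1 then 1 else 0)" using rowid[of "k+1" q] kr pq by auto
    show "(b * E) $$ (p,q) = (F * b) $$ (p,q)"
    proof (cases "p \<le> k")
      case True thus ?thesis using bE[OF pq] Fb[OF pq] rk by (simp add: mult.commute)
    next
      case False
      hence "b $$ (p,j) = 0" using rowid[of p j] pq j jk by auto
      thus ?thesis using bE[OF pq] Fb[OF pq] rk False by simp
    qed
  qed (use bc Ec Fc in auto)
  have bvwb: "b * v = w * b"
  proof -
    have "b * v = b * 1\<^sub>m r + b * E" unfolding v_def by (rule mult_add_distrib_mat[OF bc one_carrier_mat Ec])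
    also have "\<dots> = 1\<^sub>m r * b + F * b" using bc bEFb by simp
    also have "\<dots> = w * b" unfolding w_def by (rule add_mult_distrib_mat[OF one_carrier_mat Fc bc, symmetric])
    finally show ?thesis .
  qed
  have pv: "psibar \<psi> r v = \<psi> (if j = k then t else 0)"
  proof -
    have "(\<Sum>i<r-1. v $$ (i, i+1)) = (\<Sum>i<r-1. if i = j then (if j = k then t else 0) else 0)"
      by (rule sum.cong) (auto simp: v_def E_def)
    also have "\<dots> = (if j = k then t else 0)" using jk kr by simp
    finally show ?thesis unfolding psibar_def by simp
  qed
  have pw: "psibar \<psi> r w = \<psi> (t * b $$ (k,j))"
  proof -
    have "(\<Sum>i<r-1. w $$ (i, i+1)) = (\<Sum>i<r-1. if i = k then t * b $$ (k,j) else 0)"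
      by (rule sum.cong) (auto simp: w_def F_def)
    also have "\<dots> = t * b $$ (k,j)" using kr by simp
    finally show ?thesis unfolding psibar_def by simp
  qed
  have "t * b $$ (k,j) = (if j = k then t else 0) + a"
    using c0 by (auto simp: t_def c_def field_simps)
  hence "psibar \<psi> r w = psibar \<psi> r v * \<psi> a" using pw pv add by simp
  hence "psibar \<psi> r w \<noteq> psibar \<psi> r v" using a nz pv by auto
  thus ?thesis using vU wU bvwb by blast
qed



lemma finite_carrier_mat: "finite (carrier_mat n m :: 'k::finite mat set)"
proof (rule finite_subset)
  show "carrier_mat n m \<subseteq> (\<lambda>h. mat n m h) ` (PiE ({..<n}\<times>{..<m}) (\<lambda>_. UNIV :: 'k set))"
  proof
    fix A :: "'k mat" assume A: "A \<in> carrier_mat n m"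
    have "A = mat n m (restrict (\<lambda>ij. A $$ ij) ({..<n}\<times>{..<m}))"
      using A by (intro eq_matI) auto
    thus "A \<in> (\<lambda>h. mat n m h) ` (PiE ({..<n}\<times>{..<m}) (\<lambda>_. UNIV :: 'k set))" by auto
  qed
qed (intro finite_imageI finite_PiE, auto)

lemma finite_Bop: "finite (Bop r :: 'k::{finite,field} mat set)"
  unfolding Bop_def by (rule finite_imageI, rule finite_subset[OF _ finite_carrier_mat[of "r-1" "r-1"]]) auto

lemma GL_left_inv:
  assumes A: "A \<in> GL n" shows "\<exists>B \<in> carrier_mat n n. B * A = 1\<^sub>m n"
proof -
  have Ac: "A \<in> carrier_mat n n" and i: "invertible_mat A" using A by (auto simp: GL_def)
  obtain B where B: "A * B = 1\<^sub>m (dim_row A)" "B * A = 1\<^sub>m (dim_row B)"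
    using i unfolding invertible_mat_def inverts_mat_def by auto
  have "dim_col B = n" using B(1) Ac by (metis index_mult_mat(3) carrier_matD(1) index_one_mat(3))
  moreover have "dim_row B = n" using B(2) Ac by (metis index_mult_mat(3) carrier_matD(2) index_one_mat(3))
  ultimately show ?thesis using B by auto
qed

lemma UT_left_mult_image:
  fixes v :: "'k::{finite,field} mat"
  assumes v: "v \<in> UT r" shows "(\<lambda>u. v * u) ` UT r = UT r" and "inj_on (\<lambda>u. v * u) (UT r)"
proof -
  obtain B where B: "B \<in> carrier_mat r r" "B * v = 1\<^sub>m r" using GL_left_inv[OF UT_GL[OF v]] by blast
  have vc: "v \<in> carrier_mat r r" using UT_D v by auto
  show inj: "inj_on (\<lambda>u. v * u) (UT r)"
  proof (rule inj_onI)
    fix u1 u2 assume u: "u1 \<in> UT r" "u2 \<in> UT r" "v * u1 = v * u2"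
    have c: "u1 \<in> carrier_mat r r" "u2 \<in> carrier_mat r r" using UT_D u by auto
    have "B * (v * u1) = B * (v * u2)" using u by simp
    thus "u1 = u2" using c B vc by (simp add: assoc_mult_mat[symmetric, of B r r v r])
  qed
  have sub: "(\<lambda>u. v * u) ` UT r \<subseteq> UT r" using UT_mult[OF v] by auto
  show "(\<lambda>u. v * u) ` UT r = UT r"
    by (rule card_subset_eq[OF finite_UT sub]) (simp add: card_image[OF inj])
qed

theorem mainTheorem12:
  fixes \<psi> :: "'k::{finite,field} \<Rightarrow> 'r::field"
    and \<alpha> :: "'k mat \<Rightarrow> 'r"
    and r :: nat
  assumes "alg_closed TYPE('r)"
    and "CHAR('r) \<noteq> CHAR('k)"
    and "\<And>a b. \<psi> (a + b) = \<psi> a * \<psi> b"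
    and "\<exists>a. \<psi> a \<noteq> 1"
    and "r \<ge> 2"
    and "\<And>u g. u \<in> UT r \<Longrightarrow> g \<in> GL r \<Longrightarrow> \<alpha> (u * g) = psibar \<psi> r u * \<alpha> g"
    and "g \<in> GL r"
  shows "(1 / of_nat (card (UT r :: 'k mat set))) *
           (\<Sum>u\<in>UT r. \<Sum>b\<in>Bop r. inverse (psibar \<psi> r u) * \<alpha> (b * u * g)) = \<alpha> g"
proof -
  note add = assms(3) and r = assms(5) and Wh = assms(6) and g = assms(7)
  have r1: "r \<ge> 1" using r by simp
  have gc: "g \<in> carrier_mat r r" using g by (auto simp: GL_def)
  show ?thesis
  proof (cases "\<psi> 0 = 0")
    case True
    have z: "\<psi> x = 0" for x using add[of x 0] True by simp
    have ps0: "psibar \<psi> r u = 0" for u by (simp add: psibar_def z)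
    have "\<alpha> g = 0" using Wh[OF one_UT g] gc ps0 by simp
    thus ?thesis by (simp add: ps0)
  next
    case False
    have p0: "\<psi> 0 = 1" using add[of 0 0] False by simp
    have nz: "\<psi> x \<noteq> 0" for x using add[of x "-x"] p0 by auto
    have pnz: "psibar \<psi> r u \<noteq> 0" for u by (simp add: psibar_def nz)
    obtain a where a: "\<psi> a \<noteq> 1" using assms(4) by blast
    define S where "S b = (\<Sum>u\<in>UT r. inverse (psibar \<psi> r u) * \<alpha> (b * u * g))" for b
    have S0: "S b = 0" if b: "b \<in> Bop r" and nb: "b \<noteq> 1\<^sub>m r" for b
    proof -
      obtain v w where vw: "v \<in> UT r" "w \<in> UT r" "b * v = w * b" "psibar \<psi> r w \<noteq> psibar \<psi> r v"
        using Bop_twist[OF b r nb add a nz] by blast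
      have bc: "b \<in> carrier_mat r r" using Bop_D(1)[OF b r1] .
      have vc: "v \<in> carrier_mat r r" and wc: "w \<in> carrier_mat r r" using UT_D vw by auto
      have tm: "inverse (psibar \<psi> r (v * u)) * \<alpha> (b * (v * u) * g)
          = (inverse (psibar \<psi> r v) * psibar \<psi> r w) * (inverse (psibar \<psi> r u) * \<alpha> (b * u * g))"
        if u: "u \<in> UT r" for u
      proof -
        have uc: "u \<in> carrier_mat r r" using UT_D u by auto
        have "b * (v * u) = (b * v) * u" by (rule assoc_mult_mat[OF bc vc uc, symmetric])
        also have "\<dots> = w * (b * u)" unfolding vw(3) by (rule assoc_mult_mat[OF wc bc uc])
        finally have "b * (v * u) * g = w * (b * u) * g" by simp
        also have "\<dots> = w * (b * u * g)" by (rule assoc_mult_mat[OF wc mult_carrier_mat[OF bc uc] gc])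
        finally have "b * (v * u) * g = w * (b * u * g)" .
        moreover have "b * u * g \<in> GL r"
          using GL_mult[OF GL_mult[OF Bop_D(4)[OF b r1] UT_GL[OF u]] g] .
        ultimately have "\<alpha> (b * (v * u) * g) = psibar \<psi> r w * \<alpha> (b * u * g)"
          using Wh[OF vw(2)] by simp
        moreover have "psibar \<psi> r (v * u) = psibar \<psi> r v * psibar \<psi> r u"
          by (rule psibar_mult[OF add vw(1) u])
        ultimately show ?thesis by (simp add: field_simps)
      qed
      have "S b = (\<Sum>u\<in>(\<lambda>u. v * u) ` UT r. inverse (psibar \<psi> r u) * \<alpha> (b * u * g))"
        unfolding S_def UT_left_mult_image(1)[OF vw(1)] ..
      also have "\<dots> = (\<Sum>u\<in>UT r. inverse (psibar \<psi> r (v * u)) * \<alpha> (b * (v * u) * g))"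
        by (rule sum.reindex[OF UT_left_mult_image(2)[OF vw(1)], unfolded comp_def])
      also have "\<dots> = (inverse (psibar \<psi> r v) * psibar \<psi> r w) * S b"
        unfolding S_def sum_distrib_left by (rule sum.cong) (auto simp: tm)
      finally have e: "S b = (inverse (psibar \<psi> r v) * psibar \<psi> r w) * S b" .
      have ne: "inverse (psibar \<psi> r v) * psibar \<psi> r w \<noteq> 1"
      proof
        assume "inverse (psibar \<psi> r v) * psibar \<psi> r w = 1"
        hence "psibar \<psi> r w = psibar \<psi> r v" using pnz[of v] by (simp add: field_simps)
        thus False using vw(4) by simp
      qed
      from e have "(inverse (psibar \<psi> r v) * psibar \<psi> r w - 1) * S b = 0"
        by (simp add: algebra_simps)
      thus ?thesis using ne by simp
    qed
    have S1: "S (1\<^sub>m r) = of_nat (card (UT r :: 'k mat set)) * \<alpha> g"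
    proof -
      have "S (1\<^sub>m r) = (\<Sum>u\<in>(UT r :: 'k mat set). \<alpha> g)"
        unfolding S_def
      proof (rule sum.cong[OF refl])
        fix u :: "'k mat" assume u: "u \<in> UT r"
        have uc: "u \<in> carrier_mat r r" using UT_D u by auto
        have "1\<^sub>m r * u * g = u * g" using uc by simp
        thus "inverse (psibar \<psi> r u) * \<alpha> (1\<^sub>m r * u * g) = \<alpha> g"
          using Wh[OF u g] pnz[of u] by simp
      qed
      thus ?thesis by simp
    qed
    have "(\<Sum>u\<in>UT r. \<Sum>b\<in>Bop r. inverse (psibar \<psi> r u) * \<alpha> (b * u * g)) = (\<Sum>b\<in>Bop r. S b)"
      unfolding S_def by (rule sum.swap)
    also have "\<dots> = S (1\<^sub>m r) + (\<Sum>b\<in>Bop r - {1\<^sub>m r}. S b)"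
      by (rule sum.remove[OF finite_Bop one_Bop[OF r1]])
    also have "(\<Sum>b\<in>Bop r - {1\<^sub>m r}. S b) = 0"
      by (rule sum.neutral) (auto intro: S0)
    finally have "(\<Sum>u\<in>UT r. \<Sum>b\<in>Bop r. inverse (psibar \<psi> r u) * \<alpha> (b * u * g))
        = of_nat (card (UT r :: 'k mat set)) * \<alpha> g" using S1 by simp
    thus ?thesis using card_UT_nonzero[OF assms(2), of r] by simp
  qed
qed

end
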